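(* For all integers $L\ge 0$ and $n\ge 0$, $A_{L,0}(n)\ge A_{L,1}(n)$, and the inequality is strict whenever $L\ge 1$ and $n\notin\{0,3,5,6\}$.
   Context: For $i\in\{0,1\}$, $A_{L,i}(n)$ denotes the number of partitions of $n$ into parts congruent to $\pm(1+2i)\pmod 8$ with largest part at most $8L-2i-1$; equivalently $\sum_{n\ge0}A_{L,i}(n)q^n = 1/\big((q^{1+2i};q^8)_L(q^{7-2i};q^8)_L\big)$ with $(a;q)_L=\prod_{j=0}^{L-1}(1-aq^j)$. *)

theory Defs
  imports Main "HOL-Library.Multiset"
begin

definition parts_A :: "nat \<Rightarrow> nat \<Rightarrow> nat set" where
  "parts_A L i = {k::nat. 0 < k \<and> (int k mod 8 = int (1 + 2*i) mod 8 \<or> int k mod 8 = (- int (1 + 2*i)) mod 8)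
                     \<and> int k \<le> 8 * int L - 2 * int i - 1}"

definition A :: "nat \<Rightarrow> nat \<Rightarrow> nat \<Rightarrow> nat" where
  "A L i n = card {M :: nat multiset. set_mset M \<subseteq> parts_A L i \<and> sum_mset M = n}"

end

theory Submission imports Defs begin
lemma imod8: "int k mod 8 = int (k mod 8)" by (simp add: zmod_int)

lemma parts1_iff: "k \<in> parts_A L 1 \<longleftrightarrow> 0 < k \<and> (k mod 8 = 3 \<or> k mod 8 = 5) \<and> k + 3 \<le> 8 * L"
  unfolding parts_A_def by (simp add: imod8) linarith

lemma parts0_iff: "k \<in> parts_A L 0 \<longleftrightarrow> 0 < k \<and> (k mod 8 = 1 \<or> k mod 8 = 7) \<and> k + 1 \<le> 8 * L"
  unfolding parts_A_def by (simp add: imod8) linarith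
definition cnt :: "nat \<Rightarrow> nat multiset \<Rightarrow> nat" where
  "cnt r M = size (filter_mset (\<lambda>k. k mod 8 = r) M)"

lemma cnt_empty[simp]: "cnt r {#} = 0" by (simp add: cnt_def)
lemma cnt_add_mset[simp]: "cnt r (add_mset x M) = cnt r M + (if x mod 8 = r then 1 else 0)"
  by (simp add: cnt_def)
lemma cnt_union[simp]: "cnt r (M + N) = cnt r M + cnt r N" by (simp add: cnt_def)
lemma cnt_rep[simp]: "cnt r (replicate_mset k x) = (if x mod 8 = r then k else 0)"
  by (induction k) auto

definition f1 :: "nat \<Rightarrow> nat" where "f1 k = (if k mod 8 = 3 then k - 2 else k + 2)"
definition f2 :: "nat \<Rightarrow> nat" where "f2 k = (if k mod 8 = 3 then k + 4 else k - 4)"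
definition g1 :: "nat \<Rightarrow> nat" where "g1 k = (if k mod 8 = 1 then k + 2 else k - 2)"
definition g2 :: "nat \<Rightarrow> nat" where "g2 k = (if k mod 8 = 7 then k - 4 else k + 4)"
lemma dm8: "(x::nat) mod 8 = r \<Longrightarrow> \<exists>q. x = 8 * q + r"
  by (metis div_mult_mod_eq mult.commute)
lemma e1: "3 \<le> (x::nat) \<Longrightarrow> x mod 8 = 3 \<Longrightarrow> (x - 2) mod 8 = 1"
  by (drule dm8, auto)
lemma e2: "(x::nat) mod 8 = 5 \<Longrightarrow> (x + 2) mod 8 = 7"
  by (drule dm8, auto)
lemma e3: "(x::nat) mod 8 = 3 \<Longrightarrow> (x + 4) mod 8 = 7"
  by (drule dm8, auto)
lemma e4: "3 \<le> (x::nat) \<Longrightarrow> x mod 8 = 5 \<Longrightarrow> (x - 4) mod 8 = 1"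
  by (drule dm8, auto)
lemma f1_mod: assumes "3 \<le> x" "x mod 8 = 3 \<or> x mod 8 = 5" shows
   "(f1 x mod 8 = 1 \<longleftrightarrow> x mod 8 = 3) \<and> (f1 x mod 8 = 7 \<longleftrightarrow> x mod 8 = 5) \<and> g1 (f1 x) = x"
proof (cases "x mod 8 = 3")
  case True
  have h: "f1 x = x - 2" using True by (simp add: f1_def)
  have m: "(x - 2) mod 8 = 1" using e1 assms(1) True by blast
  show ?thesis unfolding h m using True assms(1) by (simp add: g1_def m)
next
  case False
  then have F: "x mod 8 = 5" using assms(2) by blast
  have h: "f1 x = x + 2" using False by (simp add: f1_def)
  have m: "(x + 2) mod 8 = 7" using e2 F by blast
  show ?thesis unfolding h m using F by (simp only: g1_def m) simp
qed

lemma f2_mod: assumes "3 \<le> x" "x mod 8 = 3 \<or> x mod 8 = 5" shows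
   "(f2 x mod 8 = 1 \<longleftrightarrow> x mod 8 = 5) \<and> (f2 x mod 8 = 7 \<longleftrightarrow> x mod 8 = 3) \<and> g2 (f2 x) = x"
proof (cases "x mod 8 = 3")
  case True
  have h: "f2 x = x + 4" using True by (simp add: f2_def)
  have m: "(x + 4) mod 8 = 7" using e3 True by blast
  show ?thesis unfolding h m using True by (simp only: g2_def m) simp
next
  case False
  then have F: "x mod 8 = 5" using assms(2) by blast
  have h: "f2 x = x - 4" using False by (simp add: f2_def)
  have m: "(x - 4) mod 8 = 1" using e4 F assms(1) by blast
  show ?thesis unfolding h m using F assms(1) by (simp add: g2_def m)
qed

definition cls :: "nat multiset \<Rightarrow> bool" where
  "cls M = (\<forall>x\<in>#M. 3 \<le> x \<and> (x mod 8 = 3 \<or> x mod 8 = 5))"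

lemma cls_add[simp]: "cls (add_mset x M) = (3 \<le> x \<and> (x mod 8 = 3 \<or> x mod 8 = 5) \<and> cls M)"
  by (auto simp: cls_def)

lemma f1_cnt: "cls M \<Longrightarrow> cnt 1 (image_mset f1 M) = cnt 3 M \<and> cnt 7 (image_mset f1 M) = cnt 5 M"
proof (induction M)
  case empty then show ?case by simp
next
  case (add x M)
  then have "3 \<le> x" "x mod 8 = 3 \<or> x mod 8 = 5" "cls M" by auto
  with f1_mod[of x] add.IH show ?case by auto
qed

lemma f2_cnt: "cls M \<Longrightarrow> cnt 1 (image_mset f2 M) = cnt 5 M \<and> cnt 7 (image_mset f2 M) = cnt 3 M"
proof (induction M)
  case empty then show ?case by simp
next
  case (add x M)
  then have "3 \<le> x" "x mod 8 = 3 \<or> x mod 8 = 5" "cls M" by auto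
  with f2_mod[of x] add.IH show ?case by auto
qed

lemma f1_step: assumes "3 \<le> x" "x mod 8 = 3 \<or> x mod 8 = 5"
  shows "f1 x + (if x mod 8 = 3 then 2 else 0) = x + (if x mod 8 = 5 then 2 else 0)"
proof (cases "x mod 8 = 3")
  case True then show ?thesis using assms(1) by (simp add: f1_def)
next
  case False then have "x mod 8 = 5" using assms(2) by blast
  then show ?thesis by (simp add: f1_def)
qed

lemma f2_step: assumes "3 \<le> x" "x mod 8 = 3 \<or> x mod 8 = 5"
  shows "f2 x + (if x mod 8 = 5 then 4 else 0) = x + (if x mod 8 = 3 then 4 else 0)"
proof (cases "x mod 8 = 3")
  case True then show ?thesis by (simp add: f2_def)
next
  case False then have "x mod 8 = 5" using assms(2) by blast
  then show ?thesis using assms(1) by (simp add: f2_def)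
qed

lemma f1_sum: "cls M \<Longrightarrow> sum_mset (image_mset f1 M) + 2 * cnt 3 M = sum_mset M + 2 * cnt 5 M"
proof (induction M)
  case empty then show ?case by simp
next
  case (add x M)
  then have "3 \<le> x" "x mod 8 = 3 \<or> x mod 8 = 5" "cls M" by auto
  with f1_step[of x] add.IH show ?case by (simp split: if_splits)
qed

lemma f2_sum: "cls M \<Longrightarrow> sum_mset (image_mset f2 M) + 4 * cnt 5 M = sum_mset M + 4 * cnt 3 M"
proof (induction M)
  case empty then show ?case by simp
next
  case (add x M)
  then have "3 \<le> x" "x mod 8 = 3 \<or> x mod 8 = 5" "cls M" by auto
  with f2_step[of x] add.IH show ?case by (simp split: if_splits)
qed

lemma g1f1: "cls M \<Longrightarrow> image_mset g1 (image_mset f1 M) = M"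
  by (induction M) (auto simp: f1_mod)

lemma g2f2: "cls M \<Longrightarrow> image_mset g2 (image_mset f2 M) = M"
  by (induction M) (auto simp: f2_mod)

definition enc :: "nat multiset \<Rightarrow> nat multiset" where
  "enc M = (let a = cnt 3 M; b = cnt 5 M in
     if b \<le> a then image_mset f1 M + replicate_mset (2*(a-b)) 1
     else if (b - a) mod 3 = 0 then image_mset f2 M + add_mset 7 (replicate_mset (4*(b-a) - 7) 1)
     else image_mset f2 M + replicate_mset (4*(b-a)) 1)"

definition mfun :: "int \<Rightarrow> int \<Rightarrow> int" where
 "mfun a b = (if b \<le> a then 3*(a-b) else if (b - a) mod 3 = 0 then 5*(b-a) - 8 else 5*(b-a))"

lemma l1: "(3 * (x::int)) mod 3 = 0" by simp
lemma l2: "(d::int) mod 3 = 0 \<Longrightarrow> (5*d - 8) mod 3 = 1" by presburger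
lemma l3: "(d::int) mod 3 \<noteq> 0 \<Longrightarrow> (5*d) mod 3 \<noteq> 0" by presburger
lemma l4: "(d::int) mod 3 = 0 \<Longrightarrow> (5*d - 8) mod 5 = 2" by presburger
lemma l5: "(5*d::int) mod 5 = 0" by simp
lemma l6: "(3 * (x::int)) mod 15 \<in> {0,3,6,9,12}"
proof -
  have "(3 * x) mod 15 = 3 * (x mod 5)" by (simp add: mod_mult_mult1[symmetric])
  moreover have "x mod 5 \<in> {0,1,2,3,4}" by auto
  ultimately show ?thesis by auto
qed
lemma l7: "(d::int) mod 3 = 0 \<Longrightarrow> (5*d - 8) mod 15 = 7" by presburger
lemma l8: "(5 * (x::int)) mod 15 \<in> {0,5,10}"
proof -
  have "(5 * x) mod 15 = 5 * (x mod 3)" by (simp add: mod_mult_mult1[symmetric])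
  moreover have "x mod 3 \<in> {0,1,2}" by auto
  ultimately show ?thesis by auto
qed

lemma m3: "mfun a b mod 3 = 0 \<longleftrightarrow> b \<le> a"
  using l2[of "b-a"] l3[of "b-a"] by (auto simp: mfun_def)

lemma m5: "\<not> b \<le> a \<Longrightarrow> (mfun a b mod 5 = 2 \<longleftrightarrow> (b - a) mod 3 = 0)"
  using l4[of "b-a"] l5[of "b-a"] by (auto simp: mfun_def)

lemma m15: "mfun a b mod 15 \<in> {0,3,5,6,7,9,10,12}"
  using l6[of "a-b"] l7[of "b-a"] l8[of "b-a"] by (auto simp: mfun_def)

lemma nd3: "\<not> b \<le> (a::nat) \<Longrightarrow> ((int b - int a) mod 3 = 0) = ((b - a) mod 3 = 0)"
  by presburger
lemma nd3': "\<not> b \<le> (a::nat) \<Longrightarrow> (b - a) mod 3 = 0 \<Longrightarrow> b - a \<ge> 3"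
  by presburger

definition mv :: "nat multiset \<Rightarrow> int" where
  "mv T = int (cnt 1 T) - int (cnt 7 T)"

lemma enc_cases:
  "enc M = (if cnt 5 M \<le> cnt 3 M then image_mset f1 M + replicate_mset (2*(cnt 3 M - cnt 5 M)) 1
     else if (cnt 5 M - cnt 3 M) mod 3 = 0 then image_mset f2 M + add_mset 7 (replicate_mset (4*(cnt 5 M - cnt 3 M) - 7) 1)
     else image_mset f2 M + replicate_mset (4*(cnt 5 M - cnt 3 M)) 1)"
  unfolding enc_def Let_def by simp

lemma X1: "\<not> b \<le> (a::nat) \<Longrightarrow> (b - a) mod 3 = 0 \<Longrightarrow> mfun (int a) (int b) = 5 * (int b - int a) - 8"
  using nd3[of b a] by (simp add: mfun_def)
lemma X2: "\<not> b \<le> (a::nat) \<Longrightarrow> b - a \<ge> 3 \<Longrightarrow> int (b + (4*(b-a) - 7)) - int (a + 1) = 5 * (int b - int a) - 8"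
  by simp
lemma X3: "\<not> b \<le> (a::nat) \<Longrightarrow> (b - a) mod 3 \<noteq> 0 \<Longrightarrow> mfun (int a) (int b) = 5 * (int b - int a)"
  using nd3[of b a] by (simp add: mfun_def)
lemma X4: "\<not> b \<le> (a::nat) \<Longrightarrow> int (b + 4*(b-a)) - int a = 5 * (int b - int a)"
  by simp

lemma mv_enc:
  assumes "cls M"
  shows "mv (enc M) = mfun (int (cnt 3 M)) (int (cnt 5 M))"
proof -
  define a where "a = cnt 3 M"
  define b where "b = cnt 5 M"
  have c1: "cnt 1 (image_mset f1 M) = a" "cnt 7 (image_mset f1 M) = b"
    using f1_cnt[OF assms] by (auto simp: a_def b_def)
  have c2: "cnt 1 (image_mset f2 M) = b" "cnt 7 (image_mset f2 M) = a"
    using f2_cnt[OF assms] by (auto simp: a_def b_def)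
  have E: "enc M = (if b \<le> a then image_mset f1 M + replicate_mset (2*(a - b)) 1
     else if (b - a) mod 3 = 0 then image_mset f2 M + add_mset 7 (replicate_mset (4*(b - a) - 7) 1)
     else image_mset f2 M + replicate_mset (4*(b - a)) 1)"
    unfolding a_def b_def by (rule enc_cases)
  show ?thesis
  proof (cases "b \<le> a")
    case True
    then have E1: "enc M = image_mset f1 M + replicate_mset (2*(a - b)) 1" using E by simp
    have "cnt 1 (enc M) = a + 2*(a-b)" "cnt 7 (enc M) = b" unfolding E1 using c1 by simp_all
    moreover have "mfun (int a) (int b) = 3 * (int a - int b)" using True by (simp add: mfun_def)
    ultimately show ?thesis using True by (simp add: mv_def a_def[symmetric] b_def[symmetric] of_nat_diff)
  next
    case False
    show ?thesis
    proof (cases "(b - a) mod 3 = 0")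
      case True
      then have E1: "enc M = image_mset f2 M + add_mset 7 (replicate_mset (4*(b - a) - 7) 1)"
        using E False by (simp only: if_False if_True simp_thms)
      have g3: "b - a \<ge> 3" by (rule nd3'[OF False True])
      have "cnt 1 (enc M) = b + (4*(b-a) - 7)" "cnt 7 (enc M) = a + 1" unfolding E1 using c2 by simp_all
      then have "mv (enc M) = int (b + (4*(b-a) - 7)) - int (a + 1)" unfolding mv_def by simp
      also have "\<dots> = mfun (int a) (int b)" using X1[OF False True] X2[OF False g3] by simp
      finally show ?thesis unfolding a_def b_def .
    next
      case F2: False
      then have E1: "enc M = image_mset f2 M + replicate_mset (4*(b - a)) 1"
        using E False by (simp only: if_False if_True simp_thms)
      have "cnt 1 (enc M) = b + 4*(b-a)" "cnt 7 (enc M) = a" unfolding E1 using c2 by simp_all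
      then have "mv (enc M) = int (b + 4*(b-a)) - int a" unfolding mv_def by simp
      also have "\<dots> = mfun (int a) (int b)" using X3[OF False F2] X4[OF False] by simp
      finally show ?thesis unfolding a_def b_def .
    qed
  qed
qed

lemma enc_inj:
  assumes "cls M1" "cls M2" "enc M1 = enc M2"
  shows "M1 = M2"
proof -
  define a1 where "a1 = cnt 3 M1"
  define b1 where "b1 = cnt 5 M1"
  define a2 where "a2 = cnt 3 M2"
  define b2 where "b2 = cnt 5 M2"
  have m: "mfun (int a1) (int b1) = mfun (int a2) (int b2)"
    using mv_enc[OF assms(1)] mv_enc[OF assms(2)] assms(3)
    unfolding a1_def b1_def a2_def b2_def by simp
  have e1: "enc M1 = (if b1 \<le> a1 then image_mset f1 M1 + replicate_mset (2*(a1-b1)) 1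
     else if (b1 - a1) mod 3 = 0 then image_mset f2 M1 + add_mset 7 (replicate_mset (4*(b1-a1) - 7) 1)
     else image_mset f2 M1 + replicate_mset (4*(b1-a1)) 1)"
    unfolding a1_def b1_def by (rule enc_cases)
  have e2: "enc M2 = (if b2 \<le> a2 then image_mset f1 M2 + replicate_mset (2*(a2-b2)) 1
     else if (b2 - a2) mod 3 = 0 then image_mset f2 M2 + add_mset 7 (replicate_mset (4*(b2-a2) - 7) 1)
     else image_mset f2 M2 + replicate_mset (4*(b2-a2)) 1)"
    unfolding a2_def b2_def by (rule enc_cases)
  have le: "b1 \<le> a1 \<longleftrightarrow> b2 \<le> a2"
  proof -
    have "b1 \<le> a1 \<longleftrightarrow> int b1 \<le> int a1" by simp
    also have "\<dots> \<longleftrightarrow> mfun (int a1) (int b1) mod 3 = 0" by (rule m3[symmetric])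
    also have "\<dots> \<longleftrightarrow> mfun (int a2) (int b2) mod 3 = 0" by (simp only: m)
    also have "\<dots> \<longleftrightarrow> int b2 \<le> int a2" by (rule m3)
    finally show ?thesis by simp
  qed
  show ?thesis
  proof (cases "b1 \<le> a1")
    case True
    then have T2: "b2 \<le> a2" using le by simp
    have "3 * (int a1 - int b1) = 3 * (int a2 - int b2)"
      using m True T2 unfolding mfun_def by simp
    then have "a1 - b1 = a2 - b2" using True T2 by arith
    then have "image_mset f1 M1 + replicate_mset (2*(a1-b1)) 1 = image_mset f1 M2 + replicate_mset (2*(a1-b1)) 1"
      using e1 e2 assms(3) True T2 by (simp only: if_True)
    then have "image_mset f1 M1 = image_mset f1 M2" by (rule add_right_imp_eq)
    then show ?thesis using g1f1[OF assms(1)] g1f1[OF assms(2)] by metis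
  next
    case False
    then have F2: "\<not> b2 \<le> a2" using le by simp
    have i1: "((int b1 - int a1) mod 3 = 0) = ((b1 - a1) mod 3 = 0)" by (rule nd3[OF False])
    have i2: "((int b2 - int a2) mod 3 = 0) = ((b2 - a2) mod 3 = 0)" by (rule nd3[OF F2])
    have j1: "(mfun (int a1) (int b1) mod 5 = 2) = ((int b1 - int a1) mod 3 = 0)"
      by (rule m5) (use False in simp)
    have j2: "(mfun (int a2) (int b2) mod 5 = 2) = ((int b2 - int a2) mod 3 = 0)"
      by (rule m5) (use F2 in simp)
    have md: "(b1 - a1) mod 3 = 0 \<longleftrightarrow> (b2 - a2) mod 3 = 0"
      using i1 i2 j1 j2 m by simp
    show ?thesis
    proof (cases "(b1 - a1) mod 3 = 0")
      case True
      then have T2: "(b2 - a2) mod 3 = 0" using md by simp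
      have "5 * (int b1 - int a1) - 8 = 5 * (int b2 - int a2) - 8"
        using m False F2 True T2 i1 i2 unfolding mfun_def by simp
      then have d: "b1 - a1 = b2 - a2" using False F2 by arith
      have "image_mset f2 M1 + add_mset 7 (replicate_mset (4*(b1-a1) - 7) 1) = image_mset f2 M2 + add_mset 7 (replicate_mset (4*(b1-a1) - 7) 1)"
        using e1 e2 assms(3) False F2 True T2 d by (simp only: if_True if_False)
      then have "image_mset f2 M1 = image_mset f2 M2" by (rule add_right_imp_eq)
      then show ?thesis using g2f2[OF assms(1)] g2f2[OF assms(2)] by metis
    next
      case Fm: False
      then have Fm2: "\<not> (b2 - a2) mod 3 = 0" using md by simp
      have "5 * (int b1 - int a1) = 5 * (int b2 - int a2)"
        using m False F2 Fm Fm2 i1 i2 unfolding mfun_def by simp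
      then have d: "b1 - a1 = b2 - a2" using False F2 by arith
      have "image_mset f2 M1 + replicate_mset (4*(b1-a1)) 1 = image_mset f2 M2 + replicate_mset (4*(b1-a1)) 1"
        using e1 e2 assms(3) False F2 Fm Fm2 d by (simp only: if_True if_False)
      then have "image_mset f2 M1 = image_mset f2 M2" by (rule add_right_imp_eq)
      then show ?thesis using g2f2[OF assms(1)] g2f2[OF assms(2)] by metis
    qed
  qed
qed

lemma cls_S1: "set_mset M \<subseteq> parts_A L 1 \<Longrightarrow> cls M"
  unfolding cls_def
proof
  fix x assume "set_mset M \<subseteq> parts_A L 1" "x \<in># M"
  then have "x \<in> parts_A L 1" by blast
  then have h0: "0 < x \<and> (x mod 8 = 3 \<or> x mod 8 = 5) \<and> x + 3 \<le> 8 * L" by (rule parts1_iff[THEN iffD1])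
  then have h: "0 < x" "x mod 8 = 3 \<or> x mod 8 = 5" by auto
  have "x mod 8 \<le> x" by (rule mod_less_eq_dividend)
  with h show "3 \<le> x \<and> (x mod 8 = 3 \<or> x mod 8 = 5)" by auto
qed

lemma f1_parts: assumes "x \<in> parts_A L 1" shows "f1 x \<in> parts_A L 0"
proof -
  have h0: "0 < x \<and> (x mod 8 = 3 \<or> x mod 8 = 5) \<and> x + 3 \<le> 8 * L" by (rule parts1_iff[THEN iffD1, OF assms])
  then have h: "0 < x" "x mod 8 = 3 \<or> x mod 8 = 5" "x + 3 \<le> 8 * L" by auto
  have "x mod 8 \<le> x" by (rule mod_less_eq_dividend)
  then have x3: "3 \<le> x" using h by auto
  have m: "f1 x mod 8 = 1 \<or> f1 x mod 8 = 7" using f1_mod[OF x3 h(2)] h(2) by blast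
  have "f1 x \<le> x + 2" "x \<le> f1 x + 2" by (auto simp: f1_def)
  then have "0 < f1 x" "f1 x + 1 \<le> 8 * L" using h x3 by linarith+
  with m show ?thesis by (simp add: parts0_iff)
qed

lemma f2_parts: assumes "x \<in> parts_A L 1" shows "f2 x \<in> parts_A L 0"
proof -
  have h0: "0 < x \<and> (x mod 8 = 3 \<or> x mod 8 = 5) \<and> x + 3 \<le> 8 * L" by (rule parts1_iff[THEN iffD1, OF assms])
  then have h: "0 < x" "x mod 8 = 3 \<or> x mod 8 = 5" "x + 3 \<le> 8 * L" by auto
  have "x mod 8 \<le> x" by (rule mod_less_eq_dividend)
  then have x3: "3 \<le> x" using h by auto
  have m: "f2 x mod 8 = 1 \<or> f2 x mod 8 = 7" using f2_mod[OF x3 h(2)] h(2) by blast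
  show ?thesis
  proof (cases "x mod 8 = 3")
    case True
    then obtain q where q: "x = 8 * q + 3" using dm8 by blast
    then have "8 * q + 6 \<le> 8 * L" using h(3) by simp
    then have "q < L" by linarith
    then have "8 * q + 8 \<le> 8 * L" by linarith
    then have "f2 x + 1 \<le> 8 * L" using True q by (simp add: f2_def)
    moreover have "0 < f2 x" using True by (simp add: f2_def)
    ultimately show ?thesis using m by (simp add: parts0_iff)
  next
    case False
    then have F: "x mod 8 = 5" using h(2) by blast
    have "x mod 8 \<le> x" by (rule mod_less_eq_dividend)
    then have "5 \<le> x" using F by simp
    then have "0 < f2 x" "f2 x + 1 \<le> 8 * L" using False h(3) by (simp_all add: f2_def)
    then show ?thesis using m by (simp add: parts0_iff)
  qed
qed

lemma enc_empty: "enc {#} = {#}" by (simp add: enc_def)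

lemma enc_set:
  assumes "set_mset M \<subseteq> parts_A L 1"
  shows "set_mset (enc M) \<subseteq> parts_A L 0"
proof (cases "M = {#}")
  case True then show ?thesis by (simp add: enc_empty)
next
  case False
  then obtain x where "x \<in># M" by blast
  then have "x \<in> parts_A L 1" using assms by blast
  then have "x + 3 \<le> 8 * L" using parts1_iff[of x L] by auto
  then have L1: "1 \<le> L" by linarith
  have p1: "1 \<in> parts_A L 0" using L1 by (simp add: parts0_iff)
  have p7: "7 \<in> parts_A L 0" using L1 by (simp add: parts0_iff)
  have i1: "set_mset (image_mset f1 M) \<subseteq> parts_A L 0" using assms f1_parts by auto
  have i2: "set_mset (image_mset f2 M) \<subseteq> parts_A L 0" using assms f2_parts by auto
  show ?thesis unfolding enc_cases using i1 i2 p1 p7 by auto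
qed

lemma enc_sum:
  assumes "cls M"
  shows "sum_mset (enc M) = sum_mset M"
proof -
  define a where "a = cnt 3 M"
  define b where "b = cnt 5 M"
  have s1: "sum_mset (image_mset f1 M) + 2 * a = sum_mset M + 2 * b"
    using f1_sum[OF assms] by (simp add: a_def b_def)
  have s2: "sum_mset (image_mset f2 M) + 4 * b = sum_mset M + 4 * a"
    using f2_sum[OF assms] by (simp add: a_def b_def)
  have E: "enc M = (if b \<le> a then image_mset f1 M + replicate_mset (2*(a - b)) 1
     else if (b - a) mod 3 = 0 then image_mset f2 M + add_mset 7 (replicate_mset (4*(b - a) - 7) 1)
     else image_mset f2 M + replicate_mset (4*(b - a)) 1)"
    unfolding a_def b_def by (rule enc_cases)
  show ?thesis
  proof (cases "b \<le> a")
    case True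
    then have E1: "enc M = image_mset f1 M + replicate_mset (2*(a - b)) 1" using E by simp
    show ?thesis unfolding E1 using s1 True by simp
  next
    case False
    show ?thesis
    proof (cases "(b - a) mod 3 = 0")
      case True
      then have E1: "enc M = image_mset f2 M + add_mset 7 (replicate_mset (4*(b - a) - 7) 1)"
        using E False by (simp only: if_False if_True simp_thms)
      have g3: "b - a \<ge> 3" by (rule nd3'[OF False True])
      show ?thesis unfolding E1 using s2 g3 False by simp
    next
      case F2: False
      then have E1: "enc M = image_mset f2 M + replicate_mset (4*(b - a)) 1"
        using E False by (simp only: if_False if_True simp_thms)
      show ?thesis unfolding E1 using s2 False by simp
    qed
  qed
qed

lemma size_le_sum: "(\<forall>x\<in>#M. 0 < x) \<Longrightarrow> size M \<le> sum_mset (M :: nat multiset)"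
  by (induction M) auto

lemma elem_le_sum: "x \<in># M \<Longrightarrow> x \<le> sum_mset (M :: nat multiset)"
  by (induction M) auto

lemma finite_S0: "finite {M :: nat multiset. set_mset M \<subseteq> parts_A L i \<and> sum_mset M = n}"
proof (rule finite_subset)
  show "{M :: nat multiset. set_mset M \<subseteq> parts_A L i \<and> sum_mset M = n} \<subseteq> (\<Union>s\<in>{0..n}. multisets_of_size {0..n} s)"
  proof
    fix M :: "nat multiset" assume "M \<in> {M. set_mset M \<subseteq> parts_A L i \<and> sum_mset M = n}"
    then have h: "set_mset M \<subseteq> parts_A L i" "sum_mset M = n" by auto
    have "\<forall>x\<in>#M. 0 < x" using h(1) by (auto simp: parts_A_def)
    then have "size M \<le> n" using size_le_sum h(2) by metis
    moreover have "set_mset M \<subseteq> {0..n}" using elem_le_sum h(2) by fastforce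
    ultimately show "M \<in> (\<Union>s\<in>{0..n}. multisets_of_size {0..n} s)"
      by (auto simp: multisets_of_size_def)
  qed
  show "finite (\<Union>s\<in>{0..n}. multisets_of_size {0..n} s)" by auto
qed

lemma wit:
  fixes n :: nat
  assumes "n \<notin> {0,3,5,6}"
  shows "\<exists>k. 7 * k \<le> n \<and> (int n - 8 * int k) mod 15 \<notin> {0,3,5,6,7,9,10,12}"
proof -
  define r where "r = n mod 15"
  have r15: "r < 15" by (simp add: r_def)
  have red: "(int n - 8 * int k) mod 15 = (int r - 8 * int k) mod 15" for k
    by (simp add: r_def zmod_int mod_diff_left_eq)
  have nr: "n = 15 * (n div 15) + r" by (simp add: r_def)
  have "r = 0 \<or> r = 1 \<or> r = 2 \<or> r = 3 \<or> r = 4 \<or> r = 5 \<or> r = 6 \<or> r = 7 \<or> r = 8 \<or> r = 9 \<or> r = 10 \<or> r = 11 \<or> r = 12 \<or> r = 13 \<or> r = 14"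
    using r15 by (auto simp: less_Suc_eq eval_nat_numeral)
  moreover have big: "r \<in> {0,3,5,6} \<Longrightarrow> n \<ge> 15"
  proof (rule ccontr)
    assume "r \<in> {0,3,5,6}" "\<not> n \<ge> 15"
    then have "n = r" using nr by simp
    then show False using assms \<open>r \<in> {0,3,5,6}\<close> by auto
  qed
  ultimately show ?thesis
  proof (elim disjE)
    assume "r = 0" then show ?thesis using red[of 2] big by (intro exI[of _ 2]) auto
  next assume "r = 1" then show ?thesis using red[of 0] by (intro exI[of _ 0]) auto
  next assume "r = 2" then show ?thesis using red[of 0] by (intro exI[of _ 0]) auto
  next assume "r = 3" then show ?thesis using red[of 2] big by (intro exI[of _ 2]) auto
  next assume "r = 4" then show ?thesis using red[of 0] by (intro exI[of _ 0]) auto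
  next assume "r = 5" then show ?thesis using red[of 2] big by (intro exI[of _ 2]) auto
  next assume "r = 6" then show ?thesis using red[of 1] big by (intro exI[of _ 1]) auto
  next assume "r = 7" then have "n \<ge> 7" using nr by linarith
    then show ?thesis using red[of 1] \<open>r = 7\<close> by (intro exI[of _ 1]) auto
  next assume "r = 8" then show ?thesis using red[of 0] by (intro exI[of _ 0]) auto
  next assume "r = 9" then have "n \<ge> 7" using nr by linarith
    then show ?thesis using red[of 1] \<open>r = 9\<close> by (intro exI[of _ 1]) auto
  next assume "r = 10" then have "n \<ge> 7" using nr by linarith
    then show ?thesis using red[of 1] \<open>r = 10\<close> by (intro exI[of _ 1]) auto
  next assume "r = 11" then show ?thesis using red[of 0] by (intro exI[of _ 0]) auto
  next assume "r = 12" then have "n \<ge> 7" using nr by linarith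
    then show ?thesis using red[of 1] \<open>r = 12\<close> by (intro exI[of _ 1]) auto
  next assume "r = 13" then show ?thesis using red[of 0] by (intro exI[of _ 0]) auto
  next assume "r = 14" then show ?thesis using red[of 0] by (intro exI[of _ 0]) auto
  qed
qed

theorem theorem2:
  fixes L n :: nat
  shows "A L 1 n \<le> A L 0 n \<and> (L \<ge> 1 \<and> n \<notin> {0, 3, 5, 6} \<longrightarrow> A L 1 n < A L 0 n)"
proof -
  define S1 where "S1 = {M :: nat multiset. set_mset M \<subseteq> parts_A L 1 \<and> sum_mset M = n}"
  define S0 where "S0 = {M :: nat multiset. set_mset M \<subseteq> parts_A L 0 \<and> sum_mset M = n}"
  have A1: "A L 1 n = card S1" by (simp add: A_def S1_def)
  have A0: "A L 0 n = card S0" by (simp add: A_def S0_def)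
  have fin: "finite S0" unfolding S0_def by (rule finite_S0)
  have inj: "inj_on enc S1"
  proof (rule inj_onI)
    fix M1 M2 assume "M1 \<in> S1" "M2 \<in> S1" "enc M1 = enc M2"
    then show "M1 = M2" using enc_inj cls_S1 unfolding S1_def by blast
  qed
  have img: "enc ` S1 \<subseteq> S0"
  proof
    fix T assume "T \<in> enc ` S1"
    then obtain M where M: "M \<in> S1" "T = enc M" by blast
    then have "set_mset M \<subseteq> parts_A L 1" "sum_mset M = n" by (auto simp: S1_def)
    then show "T \<in> S0" using M(2) enc_set enc_sum cls_S1 unfolding S0_def by auto
  qed
  have le: "card S1 \<le> card S0" by (rule card_inj_on_le[OF inj img fin])
  have strict: "card S1 < card S0" if L1: "L \<ge> 1" and nn: "n \<notin> {0, 3, 5, 6}"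
  proof -
    obtain k where k: "7 * k \<le> n" "(int n - 8 * int k) mod 15 \<notin> {0,3,5,6,7,9,10,12}"
      using wit[OF nn] by blast
    define T where "T = replicate_mset (n - 7 * k) (1::nat) + replicate_mset k 7"
    have p1: "1 \<in> parts_A L 0" using L1 by (simp add: parts0_iff)
    have p7: "7 \<in> parts_A L 0" using L1 by (simp add: parts0_iff)
    have "set_mset T \<subseteq> parts_A L 0" unfolding T_def using p1 p7 by auto
    moreover have "sum_mset T = n" unfolding T_def using k(1) by (simp add: sum_mset_replicate_mset)
    ultimately have TS: "T \<in> S0" by (simp add: S0_def)
    have mvT: "mv T = int n - 8 * int k" unfolding T_def mv_def using k(1) by (simp add: of_nat_diff)
    have "T \<notin> enc ` S1"
    proof
      assume "T \<in> enc ` S1"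
      then obtain M where M: "M \<in> S1" "T = enc M" by blast
      then have "cls M" using cls_S1 unfolding S1_def by blast
      then have "mv T mod 15 \<in> {0,3,5,6,7,9,10,12}" using M(2) mv_enc m15 by metis
      then show False using mvT k(2) by simp
    qed
    then have "enc ` S1 \<subseteq> S0 - {T}" using img by blast
    then have "card S1 \<le> card (S0 - {T})" using card_inj_on_le[OF inj] fin by blast
    also have "\<dots> < card S0" using fin TS by (meson card_Diff1_less)
    finally show ?thesis .
  qed
  show ?thesis using le strict A1 A0 by auto
qed

end
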